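(* For all $0<b<B$ there exists an instance $\langle A,f,c\rangle$ with $f$ XOS and $p(\{i\})\le b$ for all $i\in A$ such that $$\frac{\textsc{Max-Reward}(B)}{\textsc{Max-Reward}(b)}\ge\frac52.$$
   Context: An instance $\langle A,f,c\rangle$ consists of a finite set $A$ of agents, a monotone nondecreasing $f:2^A\to[0,1]$, and costs $c_i\ge0$. For $S\subseteq A$, $i\in S$: $f_S(i)=f(S)-f(S\setminus\{i\})$; $p(S)=\sum_{i\in S}c_i/f_S(i)$ (conventions: $0$ if $c_i=0=f_S(i)$, $\infty$ if $c_i>0=f_S(i)$). $f$ is XOS if it is the pointwise maximum of finitely many nonnegative additive set functions. $\textsc{Max-Reward}(B)=\max\{f(S):S\subseteq A,\ p(S)\le B\}$. *)

theory Defs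
  imports "HOL-Library.Extended_Real"
begin

text \<open>Agents are natural numbers; an instance is a finite agent set A, a set function
  f (only its values on subsets of A matter) and costs c.\<close>

definition marg :: "(nat set \<Rightarrow> real) \<Rightarrow> nat set \<Rightarrow> nat \<Rightarrow> real" where
  "marg f S i = f S - f (S - {i})"

definition pay :: "(nat set \<Rightarrow> real) \<Rightarrow> (nat \<Rightarrow> real) \<Rightarrow> nat set \<Rightarrow> ereal" where
  "pay f c S = (\<Sum>i\<in>S. if marg f S i = 0 then (if c i = 0 then 0 else \<infinity>)
                        else ereal (c i / marg f S i))"

definition monotone_sf :: "nat set \<Rightarrow> (nat set \<Rightarrow> real) \<Rightarrow> bool" where
  "monotone_sf A f \<longleftrightarrow> (\<forall>S T. S \<subseteq> T \<and> T \<subseteq> A \<longrightarrow> f S \<le> f T)"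

definition XOS :: "nat set \<Rightarrow> (nat set \<Rightarrow> real) \<Rightarrow> bool" where
  "XOS A f \<longleftrightarrow> (\<exists>W :: (nat \<Rightarrow> real) set. finite W \<and> W \<noteq> {} \<and>
      (\<forall>w\<in>W. \<forall>i\<in>A. w i \<ge> 0) \<and>
      (\<forall>S. S \<subseteq> A \<longrightarrow> f S = Max ((\<lambda>w. \<Sum>i\<in>S. w i) ` W)))"

definition is_instance :: "nat set \<Rightarrow> (nat set \<Rightarrow> real) \<Rightarrow> (nat \<Rightarrow> real) \<Rightarrow> bool" where
  "is_instance A f c \<longleftrightarrow> finite A \<and> monotone_sf A f \<and>
     (\<forall>S. S \<subseteq> A \<longrightarrow> 0 \<le> f S \<and> f S \<le> 1) \<and> (\<forall>i\<in>A. c i \<ge> 0)"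

definition max_reward :: "nat set \<Rightarrow> (nat set \<Rightarrow> real) \<Rightarrow> (nat \<Rightarrow> real) \<Rightarrow> real \<Rightarrow> real" where
  "max_reward A f c B = Max {f S | S. S \<subseteq> A \<and> pay f c S \<le> ereal B}"

end

theory Submission
  imports Defs
begin

definition w1 :: "nat \<Rightarrow> real" where
  "w1 i = (if i = 0 then 2/5 else if i = 1 then 1/5 else if i = 2 then 2/5 else 0)"
definition w2 :: "nat \<Rightarrow> real" where
  "w2 i = (if i = 1 then 2/5 else 0)"
definition ff :: "nat set \<Rightarrow> real" where
  "ff S = max (sum w1 S) (sum w2 S)"
definition cc :: "real \<Rightarrow> nat \<Rightarrow> real" where
  "cc x i = (if i = 1 then 0 else x)"

lemma subsets3: "S \<subseteq> {0,1,2::nat} \<Longrightarrow>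
  S = {} \<or> S = {0} \<or> S = {1} \<or> S = {2} \<or> S = {0,1} \<or> S = {0,2} \<or> S = {1,2} \<or> S = {0,1,2}"
proof -
  assume "S \<subseteq> {0,1,2::nat}"
  hence "S \<in> Pow {0,1,2}" by simp
  thus ?thesis by (simp add: Pow_insert insert_commute)
qed

lemma ffv:
  "ff {} = 0" "ff {0} = 2/5" "ff {1} = 2/5" "ff {2} = 2/5"
  "ff {0,1} = 3/5" "ff {0,2} = 4/5" "ff {1,2} = 3/5" "ff {0,1,2} = 1"
  by (simp_all add: ff_def w1_def w2_def)

lemma payv:
  "pay ff (cc x) {} = 0"
  "pay ff (cc x) {1} = 0"
  "x > 0 \<Longrightarrow> pay ff (cc x) {0} = ereal (5*x/2)"
  "x > 0 \<Longrightarrow> pay ff (cc x) {2} = ereal (5*x/2)"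
  "x > 0 \<Longrightarrow> pay ff (cc x) {0,1} = ereal (5*x)"
  "x > 0 \<Longrightarrow> pay ff (cc x) {1,2} = ereal (5*x)"
  "x > 0 \<Longrightarrow> pay ff (cc x) {0,2} = ereal (5*x)"
  "x > 0 \<Longrightarrow> pay ff (cc x) {0,1,2} = ereal (5*x)"
  by (simp_all add: pay_def marg_def ff_def w1_def w2_def cc_def insert_Diff_if field_simps)


lemma ff_mono: "S \<subseteq> T \<Longrightarrow> finite T \<Longrightarrow> ff S \<le> ff T"
proof -
  assume a: "S \<subseteq> T" "finite T"
  have "sum w1 S \<le> sum w1 T" by (rule sum_mono2[OF a(2) a(1)]) (simp add: w1_def)
  moreover have "sum w2 S \<le> sum w2 T" by (rule sum_mono2[OF a(2) a(1)]) (simp add: w2_def)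
  ultimately show ?thesis unfolding ff_def by linarith
qed

lemma ff_nonneg: "0 \<le> ff S"
  unfolding ff_def by (simp add: le_max_iff_disj sum_nonneg w1_def)

lemma fin_rew: "finite {ff S |S. S \<subseteq> {0,1,2::nat} \<and> P S}"
proof -
  have "{ff S |S. S \<subseteq> {0,1,2::nat} \<and> P S} \<subseteq> ff ` Pow {0,1,2}" by blast
  thus ?thesis by (rule finite_subset) simp
qed

theorem mainTheorem14:
  fixes b B :: real
  assumes "0 < b" and "b < B"
  shows "\<exists>(A::nat set) f c. is_instance A f c \<and> XOS A f \<and>
           (\<forall>i\<in>A. pay f c {i} \<le> ereal b) \<and>
           max_reward A f c B / max_reward A f c b \<ge> 5/2"
proof -
  define x where "x = min B (2*b) / 5"
  have xp: "x > 0" using assms by (simp add: x_def)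
  have x1: "5*x \<le> B" "5*x \<le> 2*b" "b < 5*x" using assms by (auto simp: x_def)
  let ?A = "{0,1,2::nat}"
  have inst: "is_instance ?A ff (cc x)"
    unfolding is_instance_def monotone_sf_def
  proof (intro conjI allI impI ballI)
    fix S assume "S \<subseteq> ?A"
    thus "ff S \<le> 1" using ff_mono[of S ?A] ffv(8) by simp
  qed (auto intro: ff_mono ff_nonneg finite_subset simp: cc_def xp less_imp_le)
  have xos: "XOS ?A ff"
    unfolding XOS_def
    by (rule exI[of _ "{w1, w2}"]) (auto simp: w1_def w2_def ff_def)
  have sing: "\<forall>i\<in>?A. pay ff (cc x) {i} \<le> ereal b"
    using payv(2) payv(3,4)[OF xp] x1 xp by auto
  have r1: "max_reward ?A ff (cc x) B = 1"
    unfolding max_reward_def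
  proof (rule Max_eqI[OF fin_rew])
    fix y assume "y \<in> {ff S |S. S \<subseteq> ?A \<and> pay ff (cc x) S \<le> ereal B}"
    then obtain S where "S \<subseteq> ?A" "y = ff S" by blast
    thus "y \<le> 1" using ff_mono[of S ?A] ffv(8) by simp
  next
    show "1 \<in> {ff S |S. S \<subseteq> ?A \<and> pay ff (cc x) S \<le> ereal B}"
      using payv(8)[OF xp] ffv(8) x1 by force
  qed
  have r2: "max_reward ?A ff (cc x) b = 2/5"
    unfolding max_reward_def
  proof (rule Max_eqI[OF fin_rew])
    fix y assume "y \<in> {ff S |S. S \<subseteq> ?A \<and> pay ff (cc x) S \<le> ereal b}"
    then obtain S where S: "S \<subseteq> ?A" "y = ff S" "pay ff (cc x) S \<le> ereal b" by blast
    from subsets3[OF S(1)] show "y \<le> 2/5"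
      using S payv(1,2) payv(3-8)[OF xp] ffv x1 by auto
  next
    show "2/5 \<in> {ff S |S. S \<subseteq> ?A \<and> pay ff (cc x) S \<le> ereal b}"
      using payv(2) ffv(3) assms by force
  qed
  show ?thesis
    by (rule exI[of _ ?A], rule exI[of _ ff], rule exI[of _ "cc x"])
       (intro conjI inst xos sing, unfold r1 r2, simp)
qed

end
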